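(* Let $L>0$, let $P\in H^2(0,L)$ be real-valued with $P(x)\ge P^0>0$ on $[0,L]$, and let $\theta_1,\dots,\theta_4\in\mathbb R$ with $\theta_3\neq0$. Let $\mathcal H=\{(w,v,\xi,\psi): w\in H^2(0,L),\ v\in H^1(0,L),\ \xi=v(L),\ \psi=v(0)\}$, $F[w,v]=\theta_1v(0)+\theta_2v'(0)+\theta_3w(0)+\theta_4w'(0)$, and let $A(w,v,\xi,\psi)=(v,(Pw')',-w'(L),F[w,v])$ with domain $$D(A)=\{(w,v,\xi,\psi): w\in H^3(0,L),\ v\in H^2(0,L),\ \xi=v(L),\ \psi=v(0),\ (Pw')'(L)=-w'(L),\ (Pw')'(0)=F[w,v]\}.$$ Then $A$ is injective and $\operatorname{ran}A=\mathcal H$; i.e. $A^{-1}$ exists and is defined on all of $\mathcal H$.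
   Context: Prime denotes $d/dx$; functions are complex-valued; $\mathcal H$ is a closed subspace of $H^2(0,L)\times H^1(0,L)\times\mathbb C\times\mathbb C$. *)

theory Defs
  imports "HOL-Analysis.Analysis"
begin

definition L2on :: "real \<Rightarrow> (real \<Rightarrow> complex) \<Rightarrow> bool" where
  "L2on L f \<longleftrightarrow> f absolutely_integrable_on {0..L} \<and>
                 (\<lambda>x. (norm (f x))^2) integrable_on {0..L}"

text \<open>Sobolev space H^k(0,L), via (continuous) representatives on [0,L]:
  H^0 = L^2, and f is in H^(k+1) iff f(x) = f(0) + integral of g over [0,x]
  for all x in [0,L], for some g in H^k (g is the weak derivative).\<close>
fun sob :: "nat \<Rightarrow> real \<Rightarrow> (real \<Rightarrow> complex) \<Rightarrow> bool" where
  "sob 0 L f = L2on L f"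
| "sob (Suc k) L f = (\<exists>g. sob k L g \<and> (\<forall>x\<in>{0..L}. f x = f 0 + integral {0..x} g))"

definition dI :: "real \<Rightarrow> (real \<Rightarrow> complex) \<Rightarrow> real \<Rightarrow> complex" where
  "dI L f x = vector_derivative f (at x within {0..L})"

text \<open>Functions are normalised to vanish outside [0,L], so that elements of the
  spaces are identified with their restriction to [0,L].\<close>
definition extI :: "real \<Rightarrow> (real \<Rightarrow> complex) \<Rightarrow> bool" where
  "extI L f \<longleftrightarrow> (\<forall>x. x \<notin> {0..L} \<longrightarrow> f x = 0)"

type_synonym state = "(real \<Rightarrow> complex) \<times> (real \<Rightarrow> complex) \<times> complex \<times> complex"

definition Hsp :: "real \<Rightarrow> state set" where
  "Hsp L = {(w, v, \<xi>, \<psi>). sob 2 L w \<and> sob 1 L v \<and> extI L w \<and> extI L v \<and>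
                          \<xi> = v L \<and> \<psi> = v 0}"

definition Fb :: "real \<Rightarrow> real \<Rightarrow> real \<Rightarrow> real \<Rightarrow> real \<Rightarrow>
                  (real \<Rightarrow> complex) \<Rightarrow> (real \<Rightarrow> complex) \<Rightarrow> complex" where
  "Fb L t1 t2 t3 t4 w v = of_real t1 * v 0 + of_real t2 * dI L v 0
                         + of_real t3 * w 0 + of_real t4 * dI L w 0"

definition flux' :: "real \<Rightarrow> (real \<Rightarrow> real) \<Rightarrow> (real \<Rightarrow> complex) \<Rightarrow> real \<Rightarrow> complex" where
  "flux' L P w = dI L (\<lambda>y. of_real (P y) * dI L w y)"

definition opA :: "real \<Rightarrow> (real \<Rightarrow> real) \<Rightarrow> real \<Rightarrow> real \<Rightarrow> real \<Rightarrow> real \<Rightarrow> state \<Rightarrow> state" where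
  "opA L P t1 t2 t3 t4 u = (case u of (w, v, \<xi>, \<psi>) \<Rightarrow>
     (v, (\<lambda>x. if x \<in> {0..L} then flux' L P w x else 0),
      - dI L w L, Fb L t1 t2 t3 t4 w v))"

definition domA :: "real \<Rightarrow> (real \<Rightarrow> real) \<Rightarrow> real \<Rightarrow> real \<Rightarrow> real \<Rightarrow> real \<Rightarrow> state set" where
  "domA L P t1 t2 t3 t4 = {(w, v, \<xi>, \<psi>). sob 3 L w \<and> sob 2 L v \<and> extI L w \<and> extI L v \<and>
       \<xi> = v L \<and> \<psi> = v 0 \<and>
       flux' L P w L = - dI L w L \<and> flux' L P w 0 = Fb L t1 t2 t3 t4 w v}"

end

theory Submission
  imports Defs
begin

lemma sigma_finite_lebesgue: "sigma_finite_measure (lebesgue :: real measure)"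
proof
  obtain A :: "real set set" where A: "countable A" "A \<subseteq> sets lborel" "\<Union>A = space lborel" "\<forall>a\<in>A. emeasure lborel a \<noteq> \<infinity>"
    using lborel.sigma_finite_countable by blast
  have 1: "A \<subseteq> sets (lebesgue::real measure)" using A(2) sets_completionI_sets by blast
  have 2: "\<forall>a\<in>A. emeasure (lebesgue::real measure) a \<noteq> \<infinity>" using A(2,4) by (auto simp: emeasure_completion)
  show "\<exists>A::real set set. countable A \<and> A \<subseteq> sets lebesgue \<and> \<Union> A = space lebesgue \<and> (\<forall>a\<in>A. emeasure lebesgue a \<noteq> \<infinity>)"
    apply (rule exI[of _ A]) using 1 2 A space_completion[of "lborel::real measure"] by blast
qed
interpretation lp: pair_sigma_finite "lebesgue :: real measure" "lebesgue :: real measure"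
  by (simp add: pair_sigma_finite_def sigma_finite_lebesgue)

lemma id_leb: "(\<lambda>x::real. x) \<in> borel_measurable lebesgue"
  by (simp add: measurable_completion)

lemma meas_tri: assumes "f \<in> borel_measurable lebesgue" "g \<in> borel_measurable lebesgue"
  shows "(\<lambda>(t::real,s::real). if t \<le> s then f t * g s else (0::complex)) \<in> borel_measurable (lebesgue \<Otimes>\<^sub>M lebesgue)"
proof -
  have f: "(\<lambda>x. f (fst x)) \<in> borel_measurable (lebesgue \<Otimes>\<^sub>M lebesgue)"
    by (rule measurable_compose[OF measurable_fst assms(1)])
  have g: "(\<lambda>x. g (snd x)) \<in> borel_measurable (lebesgue \<Otimes>\<^sub>M lebesgue)"
    by (rule measurable_compose[OF measurable_snd assms(2)])
  have a: "(fst::real\<times>real\<Rightarrow>real) \<in> borel_measurable (lebesgue \<Otimes>\<^sub>M lebesgue)"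
    using measurable_compose[OF measurable_fst[of lebesgue lebesgue] id_leb] by simp
  have b: "(snd::real\<times>real\<Rightarrow>real) \<in> borel_measurable (lebesgue \<Otimes>\<^sub>M lebesgue)"
    using measurable_compose[OF measurable_snd[of lebesgue lebesgue] id_leb] by simp
  have s: "{x \<in> space (lebesgue \<Otimes>\<^sub>M lebesgue). fst x \<le> (snd x::real)} \<in> sets (lebesgue \<Otimes>\<^sub>M lebesgue)"
    using borel_measurable_le[OF a b] by simp
  have "(\<lambda>x. if fst x \<le> snd x then f (fst x) * g (snd x) else 0) \<in> borel_measurable (lebesgue \<Otimes>\<^sub>M lebesgue)"
    by (rule measurable_If[OF borel_measurable_times[OF f g] borel_measurable_const s])
  then show ?thesis by (simp add: case_prod_beta')
qed

lemma meas_prod: assumes "f \<in> borel_measurable lebesgue" "g \<in> borel_measurable lebesgue"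
  shows "(\<lambda>(t::real,s::real). f t * g s :: real) \<in> borel_measurable (lebesgue \<Otimes>\<^sub>M lebesgue)"
proof -
  have f: "(\<lambda>x. f (fst x)) \<in> borel_measurable (lebesgue \<Otimes>\<^sub>M lebesgue)"
    by (rule measurable_compose[OF measurable_fst assms(1)])
  have g: "(\<lambda>x. g (snd x)) \<in> borel_measurable (lebesgue \<Otimes>\<^sub>M lebesgue)"
    by (rule measurable_compose[OF measurable_snd assms(2)])
  show ?thesis using borel_measurable_times[OF f g] by (simp add: case_prod_beta')
qed

lemma int_prod:
  assumes f: "integrable lebesgue (f::real\<Rightarrow>real)" and g: "integrable lebesgue (g::real \<Rightarrow> real)"
  shows "integrable (lebesgue \<Otimes>\<^sub>M lebesgue) (\<lambda>(t,s). f t * g s)"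
proof (rule lp.Fubini_integrable)
  show "(\<lambda>(t,s). f t * g s) \<in> borel_measurable (lebesgue \<Otimes>\<^sub>M lebesgue)"
    by (rule meas_prod) (use f g in auto)
  have "integrable lebesgue (\<lambda>x. norm (f x) * (LINT y|lebesgue. norm (g y)))"
    using f by (intro integrable_mult_left) auto
  moreover have "(\<lambda>x. LINT y|lebesgue. norm (case (x, y) of (t, s) \<Rightarrow> f t * g s)) = (\<lambda>x. norm (f x) * (LINT y|lebesgue. norm (g y)))"
    by (simp add: abs_mult integral_mult_right_zero)
  ultimately show "integrable lebesgue (\<lambda>x. LINT y|lebesgue. norm (case (x, y) of (t, s) \<Rightarrow> f t * g s))"
    by simp
  show "AE x in lebesgue. integrable lebesgue (\<lambda>y. case (x, y) of (t, s) \<Rightarrow> f t * g s)"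
    using g by (auto intro!: integrable_mult_right)
qed

lemma core_fubini:
  fixes q p :: "real \<Rightarrow> complex"
  assumes q: "q absolutely_integrable_on {0..b}" and p: "continuous_on {0..b} p"
  shows "integral {0..b} (\<lambda>t. q t * integral {t..b} p) = integral {0..b} (\<lambda>s. p s * integral {0..s} q)"
    and "(\<lambda>t. q t * integral {t..b} p) integrable_on {0..b}"
    and "(\<lambda>s. p s * integral {0..s} q) integrable_on {0..b}"
proof -
  define Q where "Q t = indicator {0..b} t *\<^sub>R q t" for t
  define R where "R s = indicator {0..b} s *\<^sub>R p s" for s
  have pa: "p absolutely_integrable_on {0..b}" using absolutely_integrable_continuous_real[OF p] .
  have Qi: "integrable lebesgue Q" using q unfolding Q_def set_integrable_def .
  have Ri: "integrable lebesgue R" using pa unfolding R_def set_integrable_def .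
  define F where "F = (\<lambda>(t::real,s::real). if t \<le> s then Q t * R s else 0)"
  have Fm: "F \<in> borel_measurable (lebesgue \<Otimes>\<^sub>M lebesgue)"
    unfolding F_def by (rule meas_tri) (use Qi Ri in auto)
  have Gi: "integrable (lebesgue \<Otimes>\<^sub>M lebesgue) (\<lambda>(t,s). norm (Q t) * norm (R s))"
    by (rule int_prod) (use Qi Ri in auto)
  have Fi: "integrable (lebesgue \<Otimes>\<^sub>M lebesgue) F"
    by (rule Bochner_Integration.integrable_bound[OF Gi Fm]) (auto simp: F_def norm_mult)
  have fub: "(LINT s|lebesgue. LINT t|lebesgue. F (t,s)) = (LINT t|lebesgue. LINT s|lebesgue. F (t,s))"
    using lp.Fubini_integral[of "\<lambda>t s. F (t,s)"] Fi by simp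
  have in1: "(LINT s|lebesgue. F (t,s)) = Q t * integral {t..b} p" for t
  proof (cases "t \<in> {0..b}")
    case True
    have pt: "p absolutely_integrable_on {t..b}"
      by (rule absolutely_integrable_continuous_real) (rule continuous_on_subset[OF p], use True in auto)
    have "(\<lambda>s. F (t,s)) = (\<lambda>s. Q t * (indicator {t..b} s *\<^sub>R p s))"
      using True by (auto simp: F_def R_def indicator_def)
    then have "(LINT s|lebesgue. F (t,s)) = Q t * (LINT s:{t..b}|lebesgue. p s)"
      using integral_mult_right_zero[of lebesgue "Q t" "\<lambda>s. indicator {t..b} s *\<^sub>R p s"]
      by (simp only: set_lebesgue_integral_def)
    also have "\<dots> = Q t * integral {t..b} p"
      using set_lebesgue_integral_eq_integral(2)[OF pt] by simp
    finally show ?thesis .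
  next
    case False
    then have "(\<lambda>s. F (t,s)) = (\<lambda>s. 0)" by (auto simp: F_def Q_def)
    then show ?thesis using False by (simp add: Q_def)
  qed
  have in2: "(LINT t|lebesgue. F (t,s)) = R s * integral {0..s} q" for s
  proof (cases "s \<in> {0..b}")
    case True
    have qs: "q absolutely_integrable_on {0..s}"
      by (rule set_integrable_subset[OF q]) (use True in auto)
    have "(\<lambda>t. F (t,s)) = (\<lambda>t. (indicator {0..s} t *\<^sub>R q t) * R s)"
      using True by (auto simp: F_def Q_def indicator_def)
    then have "(LINT t|lebesgue. F (t,s)) = (LINT t:{0..s}|lebesgue. q t) * R s"
      using integral_mult_left_zero[of lebesgue "\<lambda>t. indicator {0..s} t *\<^sub>R q t" "R s"]
      by (simp only: set_lebesgue_integral_def)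
    also have "\<dots> = R s * integral {0..s} q"
      using set_lebesgue_integral_eq_integral(2)[OF qs] by simp
    finally show ?thesis .
  next
    case False
    then have "(\<lambda>t. F (t,s)) = (\<lambda>t. 0)" by (auto simp: F_def R_def)
    then show ?thesis using False by (simp add: R_def)
  qed
  have i1: "integrable lebesgue (\<lambda>t. LINT s|lebesgue. F (t,s))"
    using lp.integrable_fst'[OF Fi] .
  have i2: "integrable lebesgue (\<lambda>s. LINT t|lebesgue. F (t,s))"
    using lp.integrable_snd[of "\<lambda>t s. F (t,s)"] Fi by simp
  have e1: "(\<lambda>t. LINT s|lebesgue. F (t,s)) = (\<lambda>t. indicator {0..b} t *\<^sub>R (q t * integral {t..b} p))"
    by (auto simp: in1 Q_def)
  have e2: "(\<lambda>s. LINT t|lebesgue. F (t,s)) = (\<lambda>s. indicator {0..b} s *\<^sub>R (p s * integral {0..s} q))"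
    by (auto simp: in2 R_def)
  have s1: "set_integrable lebesgue {0..b} (\<lambda>t. q t * integral {t..b} p)"
    using i1 unfolding e1 set_integrable_def .
  have s2: "set_integrable lebesgue {0..b} (\<lambda>s. p s * integral {0..s} q)"
    using i2 unfolding e2 set_integrable_def .
  have "integral {0..b} (\<lambda>t. q t * integral {t..b} p) = (LINT t|lebesgue. LINT s|lebesgue. F (t,s))"
    unfolding e1 using set_lebesgue_integral_eq_integral(2)[OF s1] by (simp add: set_lebesgue_integral_def)
  also have "\<dots> = (LINT s|lebesgue. LINT t|lebesgue. F (t,s))" using fub by simp
  also have "\<dots> = integral {0..b} (\<lambda>s. p s * integral {0..s} q)"
    unfolding e2 using set_lebesgue_integral_eq_integral(2)[OF s2] by (simp add: set_lebesgue_integral_def)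
  finally show "integral {0..b} (\<lambda>t. q t * integral {t..b} p) = integral {0..b} (\<lambda>s. p s * integral {0..s} q)" .
  show "(\<lambda>t. q t * integral {t..b} p) integrable_on {0..b}"
    using set_lebesgue_integral_eq_integral(1)[OF s1] .
  show "(\<lambda>s. p s * integral {0..s} q) integrable_on {0..b}"
    using set_lebesgue_integral_eq_integral(1)[OF s2] .
qed

lemma KL_point:
  fixes u q f f' :: "real \<Rightarrow> complex"
  assumes q: "q absolutely_integrable_on {0..b}"
    and u: "\<forall>x\<in>{0..b}. u x = u 0 + integral {0..x} q"
    and fd: "\<forall>x\<in>{0..b}. (f has_vector_derivative f' x) (at x within {0..b})"
    and f'c: "continuous_on {0..b} f'"
    and b: "0 \<le> b"
  shows "((\<lambda>t. q t * f t + u t * f' t) has_integral (u b * f b - u 0 * f 0)) {0..b}"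
proof -
  note C = core_fubini[OF q f'c]
  have ftc: "f t = f b - integral {t..b} f'" if t: "t \<in> {0..b}" for t
  proof -
    have d: "(f has_vector_derivative f' y) (at y within {t..b})" if y: "y \<in> {t..b}" for y
    proof -
      have "y \<in> {0..b}" using y t by auto
      then have "(f has_vector_derivative f' y) (at y within {0..b})" using fd by blast
      then show ?thesis by (rule has_vector_derivative_within_subset) (use t in auto)
    qed
    have "(f' has_integral f b - f t) {t..b}"
      by (rule fundamental_theorem_of_calculus) (use t d in auto)
    then show ?thesis by (simp add: integral_unique)
  qed
  have qi: "q integrable_on {0..b}" using q set_lebesgue_integral_eq_integral(1) by blast
  have f'i: "f' integrable_on {0..b}" using integrable_continuous_real[OF f'c] .
  have A: "((\<lambda>t. q t * f t) has_integral (f b * integral {0..b} q - integral {0..b} (\<lambda>t. q t * integral {t..b} f'))) {0..b}"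
  proof -
    have "((\<lambda>t. f b * q t - q t * integral {t..b} f') has_integral (f b * integral {0..b} q - integral {0..b} (\<lambda>t. q t * integral {t..b} f'))) {0..b}"
      by (intro has_integral_diff has_integral_mult_right integrable_integral qi C(2))
    then show ?thesis
    proof (rule has_integral_eq[rotated])
      fix x assume "x \<in> {0..b}"
      show "f b * q x - q x * integral {x..b} f' = q x * f x"
        by (subst ftc[OF \<open>x \<in> {0..b}\<close>]) (simp add: algebra_simps)
    qed
  qed
  have B: "((\<lambda>t. u t * f' t) has_integral (u 0 * integral {0..b} f' + integral {0..b} (\<lambda>s. f' s * integral {0..s} q))) {0..b}"
  proof -
    have "((\<lambda>t. u 0 * f' t + f' t * integral {0..t} q) has_integral (u 0 * integral {0..b} f' + integral {0..b} (\<lambda>s. f' s * integral {0..s} q))) {0..b}"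
      by (intro has_integral_add has_integral_mult_right integrable_integral f'i C(3))
    then show ?thesis
    proof (rule has_integral_eq[rotated])
      fix x assume "x \<in> {0..b}"
      with u have "u x = u 0 + integral {0..x} q" by blast
      then show "u 0 * f' x + f' x * integral {0..x} q = u x * f' x"
        by (simp add: algebra_simps)
    qed
  qed
  have fb: "integral {0..b} f' = f b - f 0" using ftc[of 0] b by simp
  have ub: "integral {0..b} q = u b - u 0" using u[rule_format, of b] b by simp
  show ?thesis
    using has_integral_add[OF A B] C(1) unfolding fb ub by (simp add: algebra_simps)
qed

definition AC :: "real \<Rightarrow> (real \<Rightarrow> complex) \<Rightarrow> (real \<Rightarrow> complex) \<Rightarrow> bool" where
  "AC L f g \<longleftrightarrow> L2on L g \<and> (\<forall>x\<in>{0..L}. f x = f 0 + integral {0..x} g)"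

definition C1 :: "real \<Rightarrow> (real \<Rightarrow> complex) \<Rightarrow> (real \<Rightarrow> complex) \<Rightarrow> bool" where
  "C1 L f f' \<longleftrightarrow> (\<forall>x\<in>{0..L}. (f has_vector_derivative f' x) (at x within {0..L})) \<and> continuous_on {0..L} f'"

lemma L2_absint: "L2on L f \<Longrightarrow> f absolutely_integrable_on {0..L}"
  by (simp add: L2on_def)

lemma L2_meas: "L2on L f \<Longrightarrow> f \<in> borel_measurable (lebesgue_on {0..L})"
proof -
  assume "L2on L f"
  then have "f absolutely_integrable_on {0..L}" by (rule L2_absint)
  moreover have "{0..L} \<in> sets lebesgue" by simp
  ultimately show ?thesis using absolutely_integrable_measurable[of "{0..L}" f] by blast
qed

lemma cont_meas: "continuous_on {0..L::real} (f::real\<Rightarrow>complex) \<Longrightarrow> f \<in> borel_measurable (lebesgue_on {0..L})"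
  by (rule continuous_imp_measurable_on_sets_lebesgue) simp_all

lemma cont_bound: "continuous_on {0..L} (f::real\<Rightarrow>complex) \<Longrightarrow> \<exists>M. \<forall>x\<in>{0..L}. norm (f x) \<le> M"
proof -
  assume "continuous_on {0..L} f"
  then have "bounded (f ` {0..L})" by (intro compact_imp_bounded compact_continuous_image) auto
  then show ?thesis by (auto simp: bounded_iff)
qed

lemma cont_L2: "continuous_on {0..L} (f::real\<Rightarrow>complex) \<Longrightarrow> L2on L f"
  unfolding L2on_def
  by (auto intro!: absolutely_integrable_continuous_real integrable_continuous_real continuous_intros)

lemma AC_cont: assumes "L2on L g" "\<forall>x\<in>{0..L}. f x = f 0 + integral {0..x} g"
  shows "continuous_on {0..L} f"
proof -
  have "g integrable_on {0..L}" using L2_absint[OF assms(1)] set_lebesgue_integral_eq_integral(1) by blast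
  then have "continuous_on {0..L} (\<lambda>x. f 0 + integral {0..x} g)"
    by (intro continuous_intros indefinite_integral_continuous_1)
  then show ?thesis
  proof (rule continuous_on_eq)
    fix x assume x: "x \<in> {0..L}"
    show "f 0 + integral {0..x} g = f x"
      by (subst assms(2)[rule_format, OF x]) (rule refl)
  qed
qed

lemma sq3: "(a+b+c)^2 \<le> 3*a^2+3*b^2+3*(c::real)^2"
proof -
  have "0 \<le> (a-b)^2 + (b-c)^2 + (a-c)^2" by simp
  then show ?thesis by (simp add: power2_eq_square algebra_simps)
qed

lemma integrable_cmul_real: "f integrable_on S \<Longrightarrow> (\<lambda>x. (c::real) * f x) integrable_on S"
  using integrable_on_cmult_left[of f S c] by simp

lemma L2_bound2:
  fixes f g1 g2 :: "real \<Rightarrow> complex"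
  assumes f: "f \<in> borel_measurable (lebesgue_on {0..L})" and g1: "L2on L g1" and g2: "L2on L g2"
    and b: "\<And>x. x \<in> {0..L} \<Longrightarrow> norm (f x) \<le> C * norm (g1 x) + C * norm (g2 x) + D"
  shows "L2on L f"
proof -
  have a1: "g1 absolutely_integrable_on {0..L}" "g2 absolutely_integrable_on {0..L}"
    using g1 g2 by (simp_all add: L2on_def)
  have i1: "(\<lambda>x. norm (g1 x)) integrable_on {0..L}" "(\<lambda>x. norm (g2 x)) integrable_on {0..L}"
    using a1 unfolding absolutely_integrable_on_def by blast+
  have s1: "(\<lambda>x. (norm (g1 x))^2) integrable_on {0..L}" "(\<lambda>x. (norm (g2 x))^2) integrable_on {0..L}"
    using g1 g2 unfolding L2on_def by blast+
  have "f absolutely_integrable_on {0..L}"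
  proof (rule measurable_bounded_by_integrable_imp_absolutely_integrable[OF f])
    show "(\<lambda>x. C * norm (g1 x) + C * norm (g2 x) + D) integrable_on {0..L}"
      by (intro integrable_add integrable_cmul_real i1 integrable_const_ivl) 
    show "{0..L} \<in> sets lebesgue" by simp
    show "\<And>x. x \<in> {0..L} \<Longrightarrow> norm (f x) \<le> C * norm (g1 x) + C * norm (g2 x) + D" by (rule b)
  qed
  moreover have "(\<lambda>x. (norm (f x))^2) integrable_on {0..L}"
  proof (rule measurable_bounded_by_integrable_imp_integrable_real)
    show "(\<lambda>x. (norm (f x))^2) \<in> borel_measurable (lebesgue_on {0..L})" using f by measurable
    show "(\<lambda>x. 3 * C^2 * (norm (g1 x))^2 + 3 * C^2 * (norm (g2 x))^2 + 3 * D^2) integrable_on {0..L}"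
      by (intro integrable_add integrable_cmul_real s1 integrable_const_ivl) 
    show "{0..L} \<in> sets lebesgue" by simp
    fix x assume x: "x \<in> {0..L}"
    have "norm (f x) \<le> C * norm (g1 x) + C * norm (g2 x) + D" using b x .
    moreover have "0 \<le> norm (f x)" by simp
    ultimately have "(norm (f x))^2 \<le> (C * norm (g1 x) + C * norm (g2 x) + D)^2"
      by (intro power_mono) auto
    also have "\<dots> \<le> 3 * C^2 * (norm (g1 x))^2 + 3 * C^2 * (norm (g2 x))^2 + 3 * D^2"
      using sq3[of "C * norm (g1 x)" "C * norm (g2 x)" D] by (simp add: power_mult_distrib)
    finally show "\<bar>(norm (f x))^2\<bar> \<le> 3 * C^2 * (norm (g1 x))^2 + 3 * C^2 * (norm (g2 x))^2 + 3 * D^2"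
      by simp
  qed
  ultimately show ?thesis unfolding L2on_def by blast
qed




lemma L2_add: assumes "L2on L f" "L2on L g" shows "L2on L (\<lambda>x. f x + g x)"
proof (rule L2_bound2[OF _ assms, of _ 1 0])
  show "(\<lambda>x. f x + g x) \<in> borel_measurable (lebesgue_on {0..L})"
    using L2_meas[OF assms(1)] L2_meas[OF assms(2)] by (rule borel_measurable_add)
qed (simp add: norm_triangle_ineq)

lemma L2_mult_cont: assumes q: "L2on L q" and c: "continuous_on {0..L} p"
  shows "L2on L (\<lambda>x. q x * p x)"
proof -
  obtain M where M: "\<forall>x\<in>{0..L}. norm (p x) \<le> M" using cont_bound[OF c] by blast
  show ?thesis
  proof (rule L2_bound2[OF _ q q, of _ "\<bar>M\<bar>" 0])
    show "(\<lambda>x. q x * p x) \<in> borel_measurable (lebesgue_on {0..L})"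
      using L2_meas[OF q] cont_meas[OF c] by (rule borel_measurable_times)
    fix x assume x: "x \<in> {0..L}"
    have "norm (p x) \<le> M" using M x by blast
    then have "norm (p x) \<le> \<bar>M\<bar>" by (meson abs_ge_self order_trans)
    then have "norm (q x) * norm (p x) \<le> norm (q x) * \<bar>M\<bar>" by (intro mult_left_mono) auto
    then have "norm (q x * p x) \<le> \<bar>M\<bar> * norm (q x)" by (simp add: norm_mult mult.commute)
    moreover have "0 \<le> \<bar>M\<bar> * norm (q x)" by simp
    ultimately show "norm (q x * p x) \<le> \<bar>M\<bar> * norm (q x) + \<bar>M\<bar> * norm (q x) + 0"
      by linarith
  qed
qed

lemma sob_L2: "sob k L f \<Longrightarrow> L2on L f"
proof (induction k arbitrary: f)
  case 0 then show ?case by simp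
next
  case (Suc k)
  then obtain g where g: "sob k L g" "\<forall>x\<in>{0..L}. f x = f 0 + integral {0..x} g"
    unfolding sob.simps by blast
  show ?case by (rule cont_L2, rule AC_cont[OF Suc.IH[OF g(1)] g(2)])
qed

lemma C1_from_AC: assumes c: "continuous_on {0..L} g" and e: "\<forall>x\<in>{0..L}. f x = f 0 + integral {0..x} g"
  shows "C1 L f g"
  unfolding C1_def
proof (intro conjI ballI c)
  fix x assume x: "x \<in> {0..L}"
  have "((\<lambda>u. integral {0..u} g) has_vector_derivative g x) (at x within {0..L})"
    by (rule integral_has_vector_derivative[OF c x])
  then have "((\<lambda>u. f 0 + integral {0..u} g) has_vector_derivative g x) (at x within {0..L})"
    using has_vector_derivative_add_const[of "\<lambda>u. integral {0..u} g" "f 0"] by (simp add: add.commute)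
  then show "(f has_vector_derivative g x) (at x within {0..L})"
    by (rule has_vector_derivative_transform[OF x, rotated]) (use e in blast)
qed

lemma AC_from_C1: assumes "C1 L f f'" shows "\<forall>x\<in>{0..L}. f x = f 0 + integral {0..x} f'"
proof
  fix x assume x: "x \<in> {0..L}"
  have d: "(f has_vector_derivative f' y) (at y within {0..x})" if y: "y \<in> {0..x}" for y
  proof -
    have "y \<in> {0..L}" using y x by auto
    then have "(f has_vector_derivative f' y) (at y within {0..L})" using assms unfolding C1_def by blast
    then show ?thesis by (rule has_vector_derivative_within_subset) (use x in auto)
  qed
  have "(f' has_integral f x - f 0) {0..x}"
    by (rule fundamental_theorem_of_calculus) (use x d in auto)
  then show "f x = f 0 + integral {0..x} f'" by (simp add: integral_unique)
qed

lemma C1_cont: assumes "C1 L f f'" shows "continuous_on {0..L} f"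
  unfolding continuous_on_eq_continuous_within
  using assms unfolding C1_def by (blast intro: has_vector_derivative_continuous)

lemma C1_dcont: "C1 L f f' \<Longrightarrow> continuous_on {0..L} f'"
  unfolding C1_def by blast

lemma dI_C1: assumes "0 < L" "C1 L f f'" "x \<in> {0..L}" shows "dI L f x = f' x"
proof -
  have "(f has_vector_derivative f' x) (at x within cbox 0 L)"
    using assms(2,3) unfolding C1_def by simp
  then show ?thesis unfolding dI_def using vector_derivative_within_cbox[OF assms(1)] assms(3) by simp
qed

lemma C1_cong: assumes "C1 L f f'" "\<forall>x\<in>{0..L}. g x = f x" shows "C1 L g f'"
  unfolding C1_def
proof (intro conjI ballI)
  fix x assume x: "x \<in> {0..L}"
  have "(f has_vector_derivative f' x) (at x within {0..L})" using assms(1) x unfolding C1_def by blast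
  then show "(g has_vector_derivative f' x) (at x within {0..L})"
    by (rule has_vector_derivative_transform[OF x, rotated]) (use assms(2) in blast)
qed (use assms(1) in \<open>simp add: C1_def\<close>)

lemma C1_mult: assumes f: "C1 L f f'" and g: "C1 L g g'"
  shows "C1 L (\<lambda>x. f x * g x) (\<lambda>x. f' x * g x + f x * g' x)"
  unfolding C1_def
proof (intro conjI ballI)
  fix x assume x: "x \<in> {0..L}"
  have "((\<lambda>x. f x * g x) has_vector_derivative f x * g' x + f' x * g x) (at x within {0..L})"
    using f g x unfolding C1_def by (intro has_vector_derivative_mult) auto
  then show "((\<lambda>x. f x * g x) has_vector_derivative f' x * g x + f x * g' x) (at x within {0..L})"
    by (simp add: add.commute)
next
  show "continuous_on {0..L} (\<lambda>x. f' x * g x + f x * g' x)"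
    using C1_cont[OF f] C1_cont[OF g] C1_dcont[OF f] C1_dcont[OF g] by (intro continuous_intros)
qed

lemma C1_add: assumes f: "C1 L f f'" and g: "C1 L g g'"
  shows "C1 L (\<lambda>x. f x + g x) (\<lambda>x. f' x + g' x)"
  unfolding C1_def
proof (intro conjI ballI)
  fix x assume x: "x \<in> {0..L}"
  show "((\<lambda>x. f x + g x) has_vector_derivative f' x + g' x) (at x within {0..L})"
    using f g x unfolding C1_def by (intro has_vector_derivative_add) auto
next
  show "continuous_on {0..L} (\<lambda>x. f' x + g' x)"
    using C1_dcont[OF f] C1_dcont[OF g] by (intro continuous_intros)
qed

lemma C1_const: "C1 L (\<lambda>x. c) (\<lambda>x. 0)"
  unfolding C1_def by (auto intro: has_vector_derivative_const)

lemma C1_inverse: assumes f: "C1 L f f'" and nz: "\<forall>x\<in>{0..L}. f x \<noteq> 0"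
  shows "C1 L (\<lambda>x. inverse (f x)) (\<lambda>x. - f' x * (inverse (f x))^2)"
  unfolding C1_def
proof (intro conjI ballI)
  fix x assume x: "x \<in> {0..L}"
  have "((inverse \<circ> f) has_vector_derivative f' x * - (inverse (f x) ^ Suc (Suc 0))) (at x within {0..L})"
  proof (rule field_vector_diff_chain_within)
    show "(f has_vector_derivative f' x) (at x within {0..L})" using f x unfolding C1_def by blast
    show "(inverse has_field_derivative - (inverse (f x) ^ Suc (Suc 0))) (at (f x) within f ` {0..L})"
      by (rule DERIV_inverse) (use nz x in blast)
  qed
  then show "((\<lambda>x. inverse (f x)) has_vector_derivative - f' x * (inverse (f x))^2) (at x within {0..L})"
    by (simp add: o_def power2_eq_square)
next
  show "continuous_on {0..L} (\<lambda>x. - f' x * (inverse (f x))^2)"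
    using C1_cont[OF f] C1_dcont[OF f] nz by (intro continuous_intros) auto
qed

lemma KL: assumes q: "L2on L q" and u: "\<forall>x\<in>{0..L}. u x = u 0 + integral {0..x} q"
  and p: "C1 L p p'"
  shows "L2on L (\<lambda>x. q x * p x + u x * p' x)"
    and "\<forall>x\<in>{0..L}. u x * p x = u 0 * p 0 + integral {0..x} (\<lambda>x. q x * p x + u x * p' x)"
proof -
  show "L2on L (\<lambda>x. q x * p x + u x * p' x)"
    by (intro L2_add L2_mult_cont q C1_cont[OF p] cont_L2 continuous_intros AC_cont[OF q u] C1_dcont[OF p])
  show "\<forall>x\<in>{0..L}. u x * p x = u 0 * p 0 + integral {0..x} (\<lambda>x. q x * p x + u x * p' x)"
  proof
    fix b assume b: "b \<in> {0..L}"
    have qb: "q absolutely_integrable_on {0..b}"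
      by (rule set_integrable_subset[OF L2_absint[OF q]]) (use b in auto)
    have ub: "\<forall>x\<in>{0..b}. u x = u 0 + integral {0..x} q"
    proof
      fix x assume "x \<in> {0..b}"
      then have "x \<in> {0..L}" using b by auto
      then show "u x = u 0 + integral {0..x} q" using u by blast
    qed
    have pb: "\<forall>x\<in>{0..b}. (p has_vector_derivative p' x) (at x within {0..b})"
    proof
      fix x assume x: "x \<in> {0..b}"
      then have "x \<in> {0..L}" using b by auto
      then have "(p has_vector_derivative p' x) (at x within {0..L})" using p unfolding C1_def by blast
      then show "(p has_vector_derivative p' x) (at x within {0..b})"
        by (rule has_vector_derivative_within_subset) (use b in auto)
    qed
    have pc: "continuous_on {0..b} p'"
      by (rule continuous_on_subset[OF C1_dcont[OF p]]) (use b in auto)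
    have "((\<lambda>t. q t * p t + u t * p' t) has_integral (u b * p b - u 0 * p 0)) {0..b}"
      by (rule KL_point[OF qb ub pb pc]) (use b in auto)
    then show "u b * p b = u 0 * p 0 + integral {0..b} (\<lambda>x. q x * p x + u x * p' x)"
      by (simp add: integral_unique)
  qed
qed




lemma L2_diff: assumes "L2on L f" "L2on L g" shows "L2on L (\<lambda>x. f x - g x)"
proof (rule L2_bound2[OF _ assms, of _ 1 0])
  show "(\<lambda>x. f x - g x) \<in> borel_measurable (lebesgue_on {0..L})"
    using L2_meas[OF assms(1)] L2_meas[OF assms(2)] by (rule borel_measurable_diff)
qed (simp add: norm_triangle_ineq4)

lemma L2_int: assumes "L2on L g" "x \<in> {0..L}" shows "g integrable_on {0..x}"
proof -
  have "g integrable_on {0..L}"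
    using L2_absint[OF assms(1)] set_lebesgue_integral_eq_integral(1) by blast
  then show ?thesis by (rule integrable_on_subinterval) (use assms(2) in auto)
qed

lemma C1_deriv_cong: assumes "C1 L f f'" "\<forall>x\<in>{0..L}. f'' x = f' x" shows "C1 L f f''"
  unfolding C1_def
proof (intro conjI ballI)
  fix x assume x: "x \<in> {0..L}"
  then show "(f has_vector_derivative f'' x) (at x within {0..L})"
    using assms unfolding C1_def by auto
next
  show "continuous_on {0..L} f''"
    using C1_dcont[OF assms(1)] by (rule continuous_on_eq) (use assms(2) in auto)
qed

lemma sob_SucI: assumes "sob k L g" "\<forall>x\<in>{0..L}. f x = f 0 + integral {0..x} g"
  shows "sob (Suc k) L f"
  using assms by (simp only: sob.simps) blast

lemma sob_SucE: assumes "sob (Suc k) L f"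
  obtains g where "sob k L g" "\<forall>x\<in>{0..L}. f x = f 0 + integral {0..x} g"
  using assms by (simp only: sob.simps) blast

lemma sob2_dec: assumes "sob (Suc (Suc 0)) L f"
  obtains g h where "C1 L f g" "L2on L h" "\<forall>x\<in>{0..L}. g x = g 0 + integral {0..x} h"
proof -
  obtain g where g: "sob (Suc 0) L g" "\<forall>x\<in>{0..L}. f x = f 0 + integral {0..x} g"
    using assms by (rule sob_SucE)
  obtain h where h: "sob 0 L h" "\<forall>x\<in>{0..L}. g x = g 0 + integral {0..x} h"
    using g(1) by (rule sob_SucE)
  have hL: "L2on L h" using h(1) by simp
  have "C1 L f g" by (rule C1_from_AC[OF AC_cont[OF hL h(2)] g(2)])
  then show ?thesis using that hL h(2) by blast
qed

lemma sob3_dec: assumes "sob (Suc (Suc (Suc 0))) L w"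
  obtains a b c where "C1 L w a" "C1 L a b" "L2on L c" "\<forall>x\<in>{0..L}. b x = b 0 + integral {0..x} c"
proof -
  obtain a where a: "sob (Suc (Suc 0)) L a" "\<forall>x\<in>{0..L}. w x = w 0 + integral {0..x} a"
    using assms by (rule sob_SucE)
  obtain b c where bc: "C1 L a b" "L2on L c" "\<forall>x\<in>{0..L}. b x = b 0 + integral {0..x} c"
    using a(1) by (rule sob2_dec)
  have "C1 L w a" by (rule C1_from_AC[OF C1_cont[OF bc(1)] a(2)])
  then show ?thesis using that bc by blast
qed

lemma flux_C1:
  assumes L: "0 < L" and wa: "C1 L w a" and D: "C1 L (\<lambda>y. complex_of_real (P y) * a y) D"
    and x: "x \<in> {0..L}"
  shows "flux' L P w x = D x"
proof -
  have "C1 L (\<lambda>y. complex_of_real (P y) * dI L w y) D"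
    by (rule C1_cong[OF D]) (use dI_C1[OF L wa] in auto)
  then show ?thesis unfolding flux'_def by (rule dI_C1[OF L _ x])
qed

lemma AC_sum:
  assumes "L2on L g1" "L2on L g2" "\<forall>x\<in>{0..L}. f1 x = f1 0 + integral {0..x} g1"
    "\<forall>x\<in>{0..L}. f2 x = f2 0 + integral {0..x} g2"
  shows "\<forall>x\<in>{0..L}. f1 x + f2 x = (f1 0 + f2 0) + integral {0..x} (\<lambda>t. g1 t + g2 t)"
proof
  fix x assume x: "x \<in> {0..L}"
  have "integral {0..x} (\<lambda>t. g1 t + g2 t) = integral {0..x} g1 + integral {0..x} g2"
    by (rule integral_add) (use L2_int assms x in auto)
  moreover have "f1 x = f1 0 + integral {0..x} g1" "f2 x = f2 0 + integral {0..x} g2"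
    using assms(3,4) x by blast+
  ultimately show "f1 x + f2 x = (f1 0 + f2 0) + integral {0..x} (\<lambda>t. g1 t + g2 t)"
    by simp
qed

lemma AC_dif:
  assumes "L2on L g1" "L2on L g2" "\<forall>x\<in>{0..L}. f1 x = f1 0 + integral {0..x} g1"
    "\<forall>x\<in>{0..L}. f2 x = f2 0 + integral {0..x} g2"
  shows "\<forall>x\<in>{0..L}. f1 x - f2 x = (f1 0 - f2 0) + integral {0..x} (\<lambda>t. g1 t - g2 t)"
proof
  fix x assume x: "x \<in> {0..L}"
  have "integral {0..x} (\<lambda>t. g1 t - g2 t) = integral {0..x} g1 - integral {0..x} g2"
    by (rule integral_diff) (use L2_int assms x in auto)
  moreover have "f1 x = f1 0 + integral {0..x} g1" "f2 x = f2 0 + integral {0..x} g2"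
    using assms(3,4) x by blast+
  ultimately show "f1 x - f2 x = (f1 0 - f2 0) + integral {0..x} (\<lambda>t. g1 t - g2 t)"
    by simp
qed




theorem lemma2p6:
  fixes L P0 t1 t2 t3 t4 :: real and P :: "real \<Rightarrow> real"
  assumes "L > 0"
    and "sob 2 L (\<lambda>x. complex_of_real (P x))"
    and "P0 > 0" and "\<forall>x\<in>{0..L}. P x \<ge> P0"
    and "t3 \<noteq> 0"
  shows "inj_on (opA L P t1 t2 t3 t4) (domA L P t1 t2 t3 t4) \<and>
         opA L P t1 t2 t3 t4 ` domA L P t1 t2 t3 t4 = Hsp L"
proof -
  note L = assms(1)
  define PC where "PC = (\<lambda>x. complex_of_real (P x))"
  have "sob (Suc (Suc 0)) L PC" using assms(2) unfolding PC_def by (simp only: numeral_2_eq_2)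
  then obtain p q where Pp: "C1 L PC p" and q: "L2on L q" and pq: "\<forall>x\<in>{0..L}. p x = p 0 + integral {0..x} q"
    by (rule sob2_dec)
  have PCnz: "\<forall>x\<in>{0..L}. PC x \<noteq> 0"
  proof
    fix x assume "x \<in> {0..L}"
    then have "P x \<ge> P0" using assms(4) by blast
    then show "PC x \<noteq> 0" using assms(3) unfolding PC_def by auto
  qed
  have flux: "flux' L P w x = p x * a x + PC x * b x"
    if "C1 L w a" "C1 L a b" "x \<in> {0..L}" for w a b x
  proof -
    have "C1 L (\<lambda>y. PC y * a y) (\<lambda>x. p x * a x + PC x * b x)"
      by (rule C1_mult[OF Pp that(2)])
    then show ?thesis using flux_C1[OF L that(1) _ that(3)] unfolding PC_def by blast
  qed
  have t3: "complex_of_real t3 \<noteq> 0" using assms(5) by simp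
  have INJ: "inj_on (opA L P t1 t2 t3 t4) (domA L P t1 t2 t3 t4)"
  proof (rule inj_onI)
    fix u1 u2 assume u1: "u1 \<in> domA L P t1 t2 t3 t4" and u2: "u2 \<in> domA L P t1 t2 t3 t4"
      and eq: "opA L P t1 t2 t3 t4 u1 = opA L P t1 t2 t3 t4 u2"
    obtain w1 v1 xi1 psi1 where u1e: "u1 = (w1, v1, xi1, psi1)" by (cases u1) auto
    obtain w2 v2 xi2 psi2 where u2e: "u2 = (w2, v2, xi2, psi2)" by (cases u2) auto
    have d1: "sob 3 L w1" "extI L w1" "xi1 = v1 L" "psi1 = v1 0"
      using u1 unfolding u1e domA_def by auto
    have d2: "sob 3 L w2" "extI L w2" "xi2 = v2 L" "psi2 = v2 0"
      using u2 unfolding u2e domA_def by auto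
    have E: "v1 = v2 \<and> (\<lambda>x. if x \<in> {0..L} then flux' L P w1 x else 0) = (\<lambda>x. if x \<in> {0..L} then flux' L P w2 x else 0)
      \<and> - dI L w1 L = - dI L w2 L \<and> Fb L t1 t2 t3 t4 w1 v1 = Fb L t1 t2 t3 t4 w2 v2"
      using eq[unfolded u1e u2e opA_def prod.case prod.inject] .
    have e1: "v1 = v2" using E by (rule conjunct1)
    have e2: "(\<lambda>x. if x \<in> {0..L} then flux' L P w1 x else 0) = (\<lambda>x. if x \<in> {0..L} then flux' L P w2 x else 0)"
      using conjunct1[OF conjunct2[OF E]] .
    have "- dI L w1 L = - dI L w2 L" using conjunct1[OF conjunct2[OF conjunct2[OF E]]] .
    then have e3: "dI L w1 L = dI L w2 L" by simp
    have e4: "Fb L t1 t2 t3 t4 w1 v1 = Fb L t1 t2 t3 t4 w2 v2" using conjunct2[OF conjunct2[OF conjunct2[OF E]]] .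
    have "sob (Suc (Suc (Suc 0))) L w1" using d1(1) by (simp only: numeral_3_eq_3)
    then obtain a1 b1 c1 where a1: "C1 L w1 a1" "C1 L a1 b1" by (rule sob3_dec)
    have "sob (Suc (Suc (Suc 0))) L w2" using d2(1) by (simp only: numeral_3_eq_3)
    then obtain a2 b2 c2 where a2: "C1 L w2 a2" "C1 L a2 b2" by (rule sob3_dec)
    define h1 where "h1 = (\<lambda>y. PC y * a1 y)"
    define h2 where "h2 = (\<lambda>y. PC y * a2 y)"
    have h1C: "C1 L h1 (\<lambda>x. p x * a1 x + PC x * b1 x)" unfolding h1_def by (rule C1_mult[OF Pp a1(2)])
    have h2C: "C1 L h2 (\<lambda>x. p x * a2 x + PC x * b2 x)" unfolding h2_def by (rule C1_mult[OF Pp a2(2)])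
    have Deq: "p x * a1 x + PC x * b1 x = p x * a2 x + PC x * b2 x" if x: "x \<in> {0..L}" for x
    proof -
      have "flux' L P w1 x = flux' L P w2 x" using fun_cong[OF e2, of x] x by simp
      then show ?thesis using flux[OF a1 x] flux[OF a2 x] by simp
    qed
    have hdiff: "h1 x - h1 0 = h2 x - h2 0" if x: "x \<in> {0..L}" for x
    proof -
      have "h1 x = h1 0 + integral {0..x} (\<lambda>x. p x * a1 x + PC x * b1 x)"
        using AC_from_C1[OF h1C] x by blast
      moreover have "h2 x = h2 0 + integral {0..x} (\<lambda>x. p x * a2 x + PC x * b2 x)"
        using AC_from_C1[OF h2C] x by blast
      moreover have "integral {0..x} (\<lambda>x. p x * a1 x + PC x * b1 x) = integral {0..x} (\<lambda>x. p x * a2 x + PC x * b2 x)"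
        by (rule integral_cong) (use Deq x in auto)
      ultimately show ?thesis by simp
    qed
    have Lin: "L \<in> {0..L}" "0 \<in> {0..L}" using L by auto
    have aL: "a1 L = a2 L" using e3 dI_C1[OF L a1(1) Lin(1)] dI_C1[OF L a2(1) Lin(1)] by simp
    have h0: "h1 0 = h2 0" using hdiff[OF Lin(1)] aL unfolding h1_def h2_def by simp
    have aeq: "a1 x = a2 x" if x: "x \<in> {0..L}" for x
    proof -
      have "PC x * a1 x = PC x * a2 x" using hdiff[OF x] h0 unfolding h1_def h2_def by simp
      then show ?thesis using PCnz x by simp
    qed
    have a0: "dI L w1 0 = dI L w2 0"
      using dI_C1[OF L a1(1) Lin(2)] dI_C1[OF L a2(1) Lin(2)] aeq[OF Lin(2)] by simp
    have "complex_of_real t3 * w1 0 = complex_of_real t3 * w2 0"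
      using e4 a0 e1 unfolding Fb_def by simp
    then have w0: "w1 0 = w2 0" using t3 by simp
    have weq: "w1 x = w2 x" for x
    proof (cases "x \<in> {0..L}")
      case True
      have "w1 x = w1 0 + integral {0..x} a1" using AC_from_C1[OF a1(1)] True by blast
      moreover have "w2 x = w2 0 + integral {0..x} a2" using AC_from_C1[OF a2(1)] True by blast
      moreover have "integral {0..x} a1 = integral {0..x} a2"
        by (rule integral_cong) (use aeq True in auto)
      ultimately show ?thesis using w0 by simp
    next
      case False
      then show ?thesis using d1(2) d2(2) unfolding extI_def by simp
    qed
    then have "w1 = w2" by blast
    then show "u1 = u2" unfolding u1e u2e using e1 d1 d2 by simp
  qed
  have SUB: "opA L P t1 t2 t3 t4 ` domA L P t1 t2 t3 t4 \<subseteq> Hsp L"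
  proof
    fix y assume "y \<in> opA L P t1 t2 t3 t4 ` domA L P t1 t2 t3 t4"
    then obtain u where u: "u \<in> domA L P t1 t2 t3 t4" and y: "y = opA L P t1 t2 t3 t4 u" by blast
    obtain w v xi psi where ue: "u = (w, v, xi, psi)" by (cases u) auto
    have d: "sob 3 L w" "sob 2 L v" "extI L w" "extI L v"
      "flux' L P w L = - dI L w L" "flux' L P w 0 = Fb L t1 t2 t3 t4 w v"
      using u unfolding ue domA_def by auto
    define fl where "fl = (\<lambda>x. if x \<in> {0..L} then flux' L P w x else 0)"
    have ye: "y = (v, fl, - dI L w L, Fb L t1 t2 t3 t4 w v)" unfolding y ue opA_def fl_def by simp
    have "sob (Suc (Suc (Suc 0))) L w" using d(1) by (simp only: numeral_3_eq_3)
    then obtain a b c where a: "C1 L w a" and b: "C1 L a b" and c: "L2on L c"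
      and bc: "\<forall>x\<in>{0..L}. b x = b 0 + integral {0..x} c" by (rule sob3_dec)
    note K1 = KL[OF q pq b]
    note K2 = KL[OF c bc Pp]
    note S = AC_sum[OF K1(1) K2(1) K1(2) K2(2)]
    have Lin: "L \<in> {0..L}" "0 \<in> {0..L}" using L by auto
    have fleq: "fl x = p x * a x + b x * PC x" if x: "x \<in> {0..L}" for x
      using flux[OF a b x] x unfolding fl_def by (simp add: mult.commute)
    have "sob 1 L fl"
    proof -
      have "sob (Suc 0) L fl"
      proof (rule sob_SucI)
        show "sob 0 L (\<lambda>t. (q t * a t + p t * b t) + (c t * PC t + b t * p t))"
          using L2_add[OF K1(1) K2(1)] by simp
        show "\<forall>x\<in>{0..L}. fl x = fl 0 + integral {0..x} (\<lambda>t. (q t * a t + p t * b t) + (c t * PC t + b t * p t))"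
        proof
          fix x assume x: "x \<in> {0..L}"
          have "fl x = p x * a x + b x * PC x" by (rule fleq[OF x])
          also have "\<dots> = (p 0 * a 0 + b 0 * PC 0) + integral {0..x} (\<lambda>t. (q t * a t + p t * b t) + (c t * PC t + b t * p t))"
            using S x by blast
          also have "p 0 * a 0 + b 0 * PC 0 = fl 0" using fleq[OF Lin(2)] by simp
          finally show "fl x = fl 0 + integral {0..x} (\<lambda>t. (q t * a t + p t * b t) + (c t * PC t + b t * p t))" .
        qed
      qed
      then show ?thesis by (simp only: One_nat_def)
    qed
    moreover have "extI L fl" unfolding extI_def fl_def by simp
    moreover have "- dI L w L = fl L" using d(5) Lin unfolding fl_def by simp
    moreover have "Fb L t1 t2 t3 t4 w v = fl 0" using d(6) Lin unfolding fl_def by simp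
    ultimately show "y \<in> Hsp L" unfolding ye Hsp_def using d(2,4) by (simp del: sob.simps)
  qed
  have SUP: "Hsp L \<subseteq> opA L P t1 t2 t3 t4 ` domA L P t1 t2 t3 t4"
  proof
    fix y assume y: "y \<in> Hsp L"
    obtain f g xi psi where ye: "y = (f, g, xi, psi)" by (cases y) auto
    have h: "sob 2 L f" "sob 1 L g" "extI L f" "extI L g" "xi = g L" "psi = g 0"
      using y unfolding ye Hsp_def by auto
    have Lin: "L \<in> {0..L}" "0 \<in> {0..L}" using L by auto
    have "sob (Suc 0) L g" using h(2) by (simp only: One_nat_def)
    then obtain g1 where g1: "sob 0 L g1" and gg: "\<forall>x\<in>{0..L}. g x = g 0 + integral {0..x} g1"
      by (rule sob_SucE)
    have g1L: "L2on L g1" using g1 by simp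
    have gc: "continuous_on {0..L} g" by (rule AC_cont[OF g1L gg])
    define G where "G = (\<lambda>x. integral {0..x} g)"
    have GC: "C1 L G g" by (rule C1_from_AC[OF gc]) (simp add: G_def)
    define c0 where "c0 = - (g L * PC L) - G L"
    define R where "R = (\<lambda>x. inverse (PC x))"
    have RC: "C1 L R (\<lambda>x. - p x * (inverse (PC x))^2)" unfolding R_def by (rule C1_inverse[OF Pp PCnz])
    define H where "H = (\<lambda>x. (c0 + G x) * R x)"
    define S where "S = (\<lambda>x. (c0 + G x) * (R x * R x))"
    define H' where "H' = (\<lambda>x. g x * R x - p x * S x)"
    have cG: "C1 L (\<lambda>x. c0 + G x) (\<lambda>x. 0 + g x)" by (rule C1_add[OF C1_const GC])
    have HC: "C1 L H H'"
    proof (rule C1_deriv_cong)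
      show "C1 L H (\<lambda>x. (0 + g x) * R x + (c0 + G x) * (- p x * (inverse (PC x))^2))"
        unfolding H_def by (rule C1_mult[OF cG RC])
      show "\<forall>x\<in>{0..L}. H' x = (0 + g x) * R x + (c0 + G x) * (- p x * (inverse (PC x))^2)"
        unfolding H'_def S_def R_def by (simp add: power2_eq_square algebra_simps)
    qed
    obtain S' where SC: "C1 L S S'"
      using C1_mult[OF cG C1_mult[OF RC RC]] unfolding S_def by blast
    have RC': "C1 L R (\<lambda>x. - p x * (inverse (PC x))^2)" by (rule RC)
    note K1 = KL[OF g1L gg RC']
    note K2 = KL[OF q pq SC]
    note Dd = AC_dif[OF K1(1) K2(1) K1(2) K2(2)]
    have H'AC: "\<forall>x\<in>{0..L}. H' x = H' 0 + integral {0..x}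
        (\<lambda>t. (g1 t * R t + g t * (- p t * (inverse (PC t))^2)) - (q t * S t + p t * S' t))"
      unfolding H'_def by (rule Dd)
    have sH': "sob 1 L H'"
    proof -
      have "sob (Suc 0) L H'"
        by (rule sob_SucI[OF _ H'AC]) (use L2_diff[OF K1(1) K2(1)] in simp)
      then show ?thesis by (simp only: One_nat_def)
    qed
    have sH: "sob 2 L H"
    proof -
      have "sob (Suc 1) L H" by (rule sob_SucI[OF sH' AC_from_C1[OF HC]])
      then show ?thesis by (simp only: numeral_2_eq_2 One_nat_def)
    qed
    define d0 where "d0 = (g 0 - complex_of_real t1 * f 0 - complex_of_real t2 * dI L f 0
                             - complex_of_real t4 * H 0) / complex_of_real t3"
    define w where "w = (\<lambda>x. if x \<in> {0..L} then d0 + integral {0..x} H else 0)"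
    have w0: "w 0 = d0" unfolding w_def using Lin by simp
    have wAC: "\<forall>x\<in>{0..L}. w x = w 0 + integral {0..x} H" unfolding w0 unfolding w_def by simp
    have sw: "sob 3 L w"
    proof -
      have "sob (Suc 2) L w" by (rule sob_SucI[OF sH wAC])
      then show ?thesis by (simp only: numeral_3_eq_3 numeral_2_eq_2)
    qed
    have wC: "C1 L w H" by (rule C1_from_AC[OF C1_cont[OF HC] wAC])
    have extw: "extI L w" unfolding extI_def w_def by simp
    have PH: "PC x * H x = c0 + G x" if x: "x \<in> {0..L}" for x
      using PCnz x unfolding H_def R_def by (simp add: field_simps)
    have fluxg: "flux' L P w x = g x" if x: "x \<in> {0..L}" for x
    proof (rule flux_C1[OF L wC _ x])
      show "C1 L (\<lambda>y. complex_of_real (P y) * H y) g"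
      proof (rule C1_cong)
        show "C1 L (\<lambda>x. c0 + G x) g" by (rule C1_deriv_cong[OF cG]) simp
        show "\<forall>x\<in>{0..L}. complex_of_real (P x) * H x = c0 + G x" using PH unfolding PC_def by blast
      qed
    qed
    have dw: "dI L w x = H x" if "x \<in> {0..L}" for x by (rule dI_C1[OF L wC that])
    have xiL: "- dI L w L = g L"
    proof -
      have "PC L * H L = c0 + G L" by (rule PH[OF Lin(1)])
      then have "PC L * H L = - (g L * PC L)" unfolding c0_def by simp
      then have e: "PC L * H L = PC L * (- g L)" by simp
      have nz: "PC L \<noteq> 0" using PCnz Lin(1) by blast
      from e nz have "H L = - g L" by (rule mult_left_cancel[THEN iffD1, rotated])
      then show ?thesis using dw[OF Lin(1)] by simp
    qed
    have Fbg: "Fb L t1 t2 t3 t4 w f = g 0"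
      unfolding Fb_def dw[OF Lin(2)] w0 d0_def using t3 by (simp add: field_simps)
    have fl: "(\<lambda>x. if x \<in> {0..L} then flux' L P w x else 0) = g"
    proof
      fix x show "(if x \<in> {0..L} then flux' L P w x else 0) = g x"
        using fluxg h(4) unfolding extI_def by auto
    qed
    have dom: "(w, f, f L, f 0) \<in> domA L P t1 t2 t3 t4"
      unfolding domA_def using sw h(1,3) extw fluxg[OF Lin(1)] fluxg[OF Lin(2)] xiL Fbg
      by (simp del: sob.simps)
    have "opA L P t1 t2 t3 t4 (w, f, f L, f 0) = y"
      unfolding opA_def ye using fl xiL Fbg h(5,6) by simp
    then show "y \<in> opA L P t1 t2 t3 t4 ` domA L P t1 t2 t3 t4" using dom by blast
  qed
  show ?thesis using INJ SUB SUP by blast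
qed



end
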